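(* Let $\mathcal H_A,\mathcal H_B$ be finite-dimensional Hilbert spaces, $|0_A\rangle\in\mathcal H_A$, $|0_B\rangle\in\mathcal H_B$ unit vectors, $|0\rangle=|0_A\rangle\otimes|0_B\rangle$, and let $|\phi\rangle\in\mathcal H_A\otimes\mathcal H_B$ be a unit vector (e.g. $|\phi\rangle=O(t)|0\rangle$ for a unitary $O(t)$). Decompose $|\phi\rangle=|x\rangle\otimes|0_B\rangle+|y\rangle$, where $|x\rangle=(\mathbb 1_A\otimes\langle 0_B|)|\phi\rangle\in\mathcal H_A$ and $(\mathbb 1_A\otimes\langle 0_B|)|y\rangle=0$. Fix $0<\epsilon<1$ and let $|\psi\rangle=(|0\rangle+\epsilon|\phi\rangle)/\sqrt{\mathcal N}$ with $\mathcal N=1+\epsilon^2+2\epsilon\,\mathrm{Re}\langle 0|\phi\rangle$, and $\rho_A=\operatorname{tr}_B|\psi\rangle\langle\psi|$. Set $\mu=\epsilon^2\langle y|y\rangle/\mathcal N$. Then $\mu\le\epsilon^2$, and for every $\alpha>1$, $$S_\alpha(\rho_A)\le \frac{\alpha}{\alpha-1}\log\frac{1}{1-\mu}\le\frac{\alpha}{\alpha-1}\log\frac{1}{1-\epsilon^2}.$$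
   Context: For a density matrix $\rho$, the Rényi entropy is $S_\alpha(\rho)=\frac{1}{1-\alpha}\log\operatorname{tr}\rho^\alpha$. One has $\rho_A=(1-\mu)|v\rangle\langle v|+\mu\,\omega$ with $|v\rangle=(|0_A\rangle+\epsilon|x\rangle)/\sqrt{\mathcal N(1-\mu)}$ a unit vector and $\omega=\operatorname{tr}_B|y\rangle\langle y|/\langle y|y\rangle$ (when $|y\rangle\neq 0$). *)

theory Defs
  imports "HOL-Analysis.Analysis" "Jordan_Normal_Form.Matrix" "Jordan_Normal_Form.Char_Poly"
begin

text \<open>Finite-dimensional Hilbert spaces are modelled as coordinate spaces C^n
  (vectors of type complex vec with dim = n).  The tensor product C^dA (x) C^dB is
  C^(dA*dB) with the basis |i> (x) |j> at index i*dB + j.\<close>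

definition braket :: "complex vec \<Rightarrow> complex vec \<Rightarrow> complex" where
  "braket u v = (\<Sum>i<dim_vec v. cnj (u $ i) * v $ i)"

definition tensor_vec :: "complex vec \<Rightarrow> complex vec \<Rightarrow> complex vec" where
  "tensor_vec u v = vec (dim_vec u * dim_vec v) (\<lambda>k. u $ (k div dim_vec v) * v $ (k mod dim_vec v))"

text \<open>(1_A (x) <b|) applied to a vector w of C^dA (x) C^dB, with b in C^dB.\<close>
definition contract_B :: "nat \<Rightarrow> complex vec \<Rightarrow> complex vec \<Rightarrow> complex vec" where
  "contract_B dA b w = vec dA (\<lambda>i. \<Sum>j<dim_vec b. cnj (b $ j) * w $ (i * dim_vec b + j))"

definition ketbra :: "complex vec \<Rightarrow> complex mat" where
  "ketbra v = mat (dim_vec v) (dim_vec v) (\<lambda>(i, j). v $ i * cnj (v $ j))"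

definition ptrace_B :: "nat \<Rightarrow> nat \<Rightarrow> complex mat \<Rightarrow> complex mat" where
  "ptrace_B dA dB M = mat dA dA (\<lambda>(i, i'). \<Sum>j<dB. M $$ (i * dB + j, i' * dB + j))"

text \<open>tr rho^alpha for a density matrix (Hermitian, PSD), via spectral calculus:
  sum of lambda^alpha over the eigenvalues counted with algebraic multiplicity.\<close>
definition trace_powr :: "complex mat \<Rightarrow> real \<Rightarrow> real" where
  "trace_powr \<rho> \<alpha> = (\<Sum>e\<in>{z. poly (char_poly \<rho>) z = 0}.
       real (order e (char_poly \<rho>)) * (Re e) powr \<alpha>)"

definition renyi_entropy :: "real \<Rightarrow> complex mat \<Rightarrow> real" where
  "renyi_entropy \<alpha> \<rho> = 1 / (1 - \<alpha>) * ln (trace_powr \<rho> \<alpha>)"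

end

theory Submission
  imports Defs "Jordan_Normal_Form.Spectral_Radius" begin

lemma sq_cmod: "(complex_of_real (cmod z))\<^sup>2 = z * cnj z"
  by (metis complex_norm_square of_real_power)


lemma cs_complex:
  fixes f g :: "'i \<Rightarrow> complex"
  shows "(cmod (\<Sum>i\<in>I. cnj (f i) * g i))\<^sup>2 \<le> (\<Sum>i\<in>I. (cmod (f i))\<^sup>2) * (\<Sum>i\<in>I. (cmod (g i))\<^sup>2)"
proof -
  have "cmod (\<Sum>i\<in>I. cnj (f i) * g i) \<le> (\<Sum>i\<in>I. cmod (f i) * cmod (g i))"
    by (rule order_trans[OF norm_sum]) (simp add: norm_mult)
  hence "(cmod (\<Sum>i\<in>I. cnj (f i) * g i))\<^sup>2 \<le> (\<Sum>i\<in>I. cmod (f i) * cmod (g i))\<^sup>2"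
    by (simp add: power_mono)
  also have "\<dots> \<le> (\<Sum>i\<in>I. (cmod (f i))\<^sup>2) * (\<Sum>i\<in>I. (cmod (g i))\<^sup>2)"
    by (rule Cauchy_Schwarz_ineq_sum)
  finally show ?thesis .
qed

definition qf :: "nat \<Rightarrow> complex mat \<Rightarrow> complex vec \<Rightarrow> complex" where
  "qf n H w = (\<Sum>i<n. \<Sum>j<n. cnj (w$i) * H$$(i,j) * w$j)"
definition herm :: "nat \<Rightarrow> complex mat \<Rightarrow> bool" where
  "herm n H = (\<forall>i<n. \<forall>j<n. H$$(i,j) = cnj (H$$(j,i)))"
definition nsq :: "nat \<Rightarrow> complex vec \<Rightarrow> real" where
  "nsq n w = (\<Sum>i<n. (cmod (w$i))\<^sup>2)"

lemma pow_mat_add: assumes "A \<in> carrier_mat n n"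
  shows "A ^\<^sub>m (k + l) = A ^\<^sub>m k * A ^\<^sub>m l"
  using assms
proof (induct l)
  case 0 thus ?case by simp
next
  case (Suc l)
  have "A ^\<^sub>m (k + Suc l) = (A ^\<^sub>m k * A ^\<^sub>m l) * A" using Suc by simp
  also have "\<dots> = A ^\<^sub>m k * (A ^\<^sub>m l * A)"
    by (rule assoc_mult_mat[of _ n n _ n _ n]) (use Suc.prems in auto)
  finally show ?case by simp
qed

lemma mult_entry: assumes "A \<in> carrier_mat n n" "B \<in> carrier_mat n n" "i < n" "j < n"
  shows "(A * B) $$ (i,j) = (\<Sum>l<n. A$$(i,l) * B$$(l,j))"
  using assms by (auto simp: scalar_prod_def atLeast0LessThan intro!: sum.cong)

lemma herm_square: assumes "P \<in> carrier_mat n n" "herm n P"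
  shows "herm n (P * P)"
  unfolding herm_def
proof (intro allI impI)
  fix i j assume ij: "i < n" "j < n"
  have "(P * P) $$ (i,j) = (\<Sum>l<n. P$$(i,l) * P$$(l,j))" by (rule mult_entry[OF assms(1) assms(1) ij])
  also have "\<dots> = (\<Sum>l<n. cnj (P$$(j,l) * P$$(l,i)))"
  proof -
    have h': "\<And>a b. a<n \<Longrightarrow> b<n \<Longrightarrow> cnj (P$$(a,b)) = P$$(b,a)"
      using assms(2) unfolding herm_def by (metis complex_cnj_cnj)
    show ?thesis using ij by (auto intro!: sum.cong simp: h' mult.commute)
  qed
  also have "\<dots> = cnj ((P * P) $$ (j,i))" by (simp add: mult_entry[OF assms(1) assms(1) ij(2) ij(1)])
  finally show "(P * P) $$ (i,j) = cnj ((P * P) $$ (j,i))" .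
qed

lemma qf_square: assumes P: "P \<in> carrier_mat n n" and h: "herm n P"
  shows "qf n (P * P) w = complex_of_real (\<Sum>l<n. (cmod (\<Sum>j<n. P$$(l,j) * w$j))\<^sup>2)"
proof -
  have "qf n (P * P) w = (\<Sum>i<n. \<Sum>j<n. \<Sum>l<n. cnj (w$i) * P$$(i,l) * P$$(l,j) * w$j)"
    unfolding qf_def by (auto simp: mult_entry[OF P P] sum_distrib_left sum_distrib_right mult.assoc intro!: sum.cong)
  also have "\<dots> = (\<Sum>l<n. (\<Sum>i<n. cnj (w$i) * P$$(i,l)) * (\<Sum>j<n. P$$(l,j) * w$j))"
  proof -
    have "(\<Sum>i<n. \<Sum>j<n. \<Sum>l<n. cnj (w$i) * P$$(i,l) * P$$(l,j) * w$j)
        = (\<Sum>i<n. \<Sum>l<n. \<Sum>j<n. cnj (w$i) * P$$(i,l) * P$$(l,j) * w$j)"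
      by (rule sum.cong, simp, rule sum.swap)
    also have "\<dots> = (\<Sum>l<n. \<Sum>i<n. \<Sum>j<n. cnj (w$i) * P$$(i,l) * P$$(l,j) * w$j)"
      by (rule sum.swap)
    also have "\<dots> = (\<Sum>l<n. (\<Sum>i<n. cnj (w$i) * P$$(i,l)) * (\<Sum>j<n. P$$(l,j) * w$j))"
      by (simp add: sum_product mult.assoc)
    finally show ?thesis .
  qed
  also have "\<dots> = (\<Sum>l<n. cnj (\<Sum>j<n. P$$(l,j) * w$j) * (\<Sum>j<n. P$$(l,j) * w$j))"
  proof -
    have h': "\<And>a b. a<n \<Longrightarrow> b<n \<Longrightarrow> cnj (P$$(a,b)) = P$$(b,a)"
      using h unfolding herm_def by (metis complex_cnj_cnj)
    show ?thesis by (auto intro!: sum.cong simp: h' mult.commute cnj_sum)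
  qed
  also have "\<dots> = complex_of_real (\<Sum>l<n. (cmod (\<Sum>j<n. P$$(l,j) * w$j))\<^sup>2)"
    unfolding of_real_sum by (rule sum.cong, simp, simp only: complex_norm_square mult.commute)
  finally show ?thesis .
qed

lemma qf_as_inner: "qf n P w = (\<Sum>l<n. cnj (w$l) * (\<Sum>j<n. P$$(l,j) * w$j))"
  unfolding qf_def by (simp add: sum_distrib_left mult.assoc)

lemma mv_entry: assumes "A \<in> carrier_mat n n" "v \<in> carrier_vec n" "i < n"
  shows "(A *\<^sub>v v) $ i = (\<Sum>j<n. A$$(i,j) * v$j)"
  using assms by (auto simp: scalar_prod_def atLeast0LessThan intro!: sum.cong)

lemma nsq_pos: assumes "v \<in> carrier_vec n" "v \<noteq> 0\<^sub>v n" shows "nsq n v > 0"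
proof -
  obtain i where i: "i < n" "v $ i \<noteq> 0" using assms by (metis eq_vecI carrier_vecD index_zero_vec)
  have "(cmod (v$i))\<^sup>2 \<le> nsq n v" unfolding nsq_def
    by (rule member_le_sum) (use i in auto)
  moreover have "(cmod (v$i))\<^sup>2 > 0" using i by simp
  ultimately show ?thesis by linarith
qed

lemma eigen_real: assumes H: "H \<in> carrier_mat n n"
  and psd: "\<And>w. w \<in> carrier_vec n \<Longrightarrow> Im (qf n H w) = 0 \<and> Re (qf n H w) \<ge> 0"
  and ev: "eigenvalue H e"
  shows "Im e = 0 \<and> Re e \<ge> 0"
proof -
  from ev obtain v where v: "eigenvector H v e" unfolding eigenvalue_def by auto
  hence vc: "v \<in> carrier_vec n" and v0: "v \<noteq> 0\<^sub>v n" and eq: "H *\<^sub>v v = e \<cdot>\<^sub>v v"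
    using H unfolding eigenvector_def by auto
  have "qf n H v = (\<Sum>l<n. cnj (v$l) * (H *\<^sub>v v) $ l)"
    unfolding qf_as_inner using mv_entry[OF H vc] by simp
  also have "\<dots> = (\<Sum>l<n. e * (cnj (v$l) * v $ l))" unfolding eq using vc by (auto intro!: sum.cong)
  also have "\<dots> = e * complex_of_real (nsq n v)" unfolding nsq_def of_real_sum
    by (simp add: sum_distrib_left sq_cmod mult.commute)
  finally have q: "qf n H v = e * complex_of_real (nsq n v)" .
  have p: "nsq n v > 0" by (rule nsq_pos[OF vc v0])
  from psd[OF vc] q have "Im e * nsq n v = 0" "Re e * nsq n v \<ge> 0" by auto
  with p show ?thesis by (auto simp: zero_le_mult_iff)
qed

lemma eigen_scale: fixes H :: "complex mat" assumes H: "H \<in> carrier_mat n n" and k: "k \<noteq> 0"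
  and ev: "eigenvalue (k \<cdot>\<^sub>m H) e"
  shows "eigenvalue H (e / k)"
proof -
  from ev obtain v where v: "eigenvector (k \<cdot>\<^sub>m H) v e" unfolding eigenvalue_def by auto
  hence vc: "v \<in> carrier_vec n" and v0: "v \<noteq> 0\<^sub>v n" and eq: "(k \<cdot>\<^sub>m H) *\<^sub>v v = e \<cdot>\<^sub>v v"
    using H unfolding eigenvector_def by auto
  have "H *\<^sub>v v = (e / k) \<cdot>\<^sub>v v"
  proof (rule eq_vecI)
    fix i assume "i < dim_vec ((e / k) \<cdot>\<^sub>v v)"
    hence i: "i < n" using vc by auto
    have "((k \<cdot>\<^sub>m H) *\<^sub>v v) $ i = k * (H *\<^sub>v v) $ i"
      using mv_entry[OF H vc i] mv_entry[of "k \<cdot>\<^sub>m H", OF _ vc i] H i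
      by (simp add: sum_distrib_left mult.assoc)
    with eq i vc have "k * (H *\<^sub>v v) $ i = e * v $ i" by simp
    note kx = this
    have "(H *\<^sub>v v) $ i = (k * (H *\<^sub>v v) $ i) / k" using k by simp
    hence "(H *\<^sub>v v) $ i = e * v $ i / k" by (simp only: kx)
    thus "(H *\<^sub>v v) $ i = ((e / k) \<cdot>\<^sub>v v) $ i" using i vc k by simp
  qed (use H vc in auto)
  thus ?thesis unfolding eigenvalue_def eigenvector_def using H vc v0 by auto
qed

lemma herm_pow2: assumes B: "B \<in> carrier_mat n n" and h: "herm n B"
  shows "herm n (B ^\<^sub>m (2^k))"
proof (induct k)
  case 0 thus ?case using h B by simp
next
  case (Suc k)
  have "B ^\<^sub>m (2^Suc k) = B ^\<^sub>m (2^k) * B ^\<^sub>m (2^k)"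
    using pow_mat_add[OF B, of "2^k" "2^k"] by (simp add: mult_2)
  thus ?case using herm_square[OF pow_carrier_mat[OF B] Suc] by simp
qed

lemma power_growth: assumes B: "B \<in> carrier_mat n n" and h: "herm n B"
  and q: "q \<ge> 0" and un: "nsq n u > 0" and ray: "Re (qf n B u) \<ge> q * nsq n u"
  shows "Re (qf n (B ^\<^sub>m (2^k)) u) \<ge> q^(2^k) * nsq n u"
proof (induct k)
  case 0 thus ?case using ray B by simp
next
  case (Suc k)
  let ?P = "B ^\<^sub>m (2^k)"
  have P: "?P \<in> carrier_mat n n" using B by simp
  have hP: "herm n ?P" by (rule herm_pow2[OF B h])
  have eq: "B ^\<^sub>m (2^Suc k) = ?P * ?P"
    using pow_mat_add[OF B, of "2^k" "2^k"] by (simp add: mult_2)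
  define S where "S = (\<Sum>l<n. (cmod (\<Sum>j<n. ?P$$(l,j) * u$j))\<^sup>2)"
  have qPP: "qf n (B ^\<^sub>m (2^Suc k)) u = complex_of_real S"
    unfolding eq S_def by (rule qf_square[OF P hP])
  have cs: "(cmod (qf n ?P u))\<^sup>2 \<le> nsq n u * S"
    unfolding qf_as_inner nsq_def S_def by (rule cs_complex)
  have a: "q^(2^k) * nsq n u \<ge> 0" using q un by simp
  have "Re (qf n ?P u) \<le> cmod (qf n ?P u)" by (rule complex_Re_le_cmod)
  hence "(q^(2^k) * nsq n u)\<^sup>2 \<le> (cmod (qf n ?P u))\<^sup>2"
    using Suc a by (meson order_trans power_mono)
  hence "(q^(2^k) * nsq n u)\<^sup>2 \<le> nsq n u * S" using cs by linarith
  hence "nsq n u * (q^(2^Suc k) * nsq n u) \<le> nsq n u * S"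
    by (simp add: power2_eq_square power_mult_distrib power_add mult_2 algebra_simps)
  hence "q^(2^Suc k) * nsq n u \<le> S" using un by simp
  thus ?case using qPP by simp
qed

lemma qf_bound: assumes P: "P \<in> carrier_mat n n" and nb: "norm_bound P C"
  shows "cmod (qf n P u) \<le> C * (\<Sum>i<n. cmod (u$i))\<^sup>2"
proof -
  have "cmod (qf n P u) \<le> (\<Sum>i<n. \<Sum>j<n. cmod (cnj (u$i) * P$$(i,j) * u$j))"
    unfolding qf_def by (rule order_trans[OF norm_sum], rule sum_mono, rule norm_sum)
  also have "\<dots> \<le> (\<Sum>i<n. \<Sum>j<n. C * (cmod (u$i) * cmod (u$j)))"
  proof (rule sum_mono, rule sum_mono)
    fix i j assume "i \<in> {..<n}" "j \<in> {..<n}"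
    hence "cmod (P$$(i,j)) \<le> C" using nb P unfolding norm_bound_def by auto
    thus "cmod (cnj (u$i) * P$$(i,j) * u$j) \<le> C * (cmod (u$i) * cmod (u$j))"
    proof -
      have "cmod (P$$(i,j)) * (cmod (u$i) * cmod (u$j)) \<le> C * (cmod (u$i) * cmod (u$j))"
        by (rule mult_right_mono) (use \<open>cmod (P$$(i,j)) \<le> C\<close> in auto)
      thus ?thesis by (simp add: norm_mult mult.commute mult.left_commute)
    qed
  qed
  also have "\<dots> = C * (\<Sum>i<n. cmod (u$i))\<^sup>2"
  proof -
    have "C * (\<Sum>i<n. cmod (u$i))\<^sup>2 = C * (\<Sum>i<n. \<Sum>j<n. cmod (u$i) * cmod (u$j))"
      by (simp only: power2_eq_square Groups_Big.sum_product)
    also have "\<dots> = (\<Sum>i<n. \<Sum>j<n. C * (cmod (u$i) * cmod (u$j)))"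
      by (simp only: sum_distrib_left)
    finally show ?thesis by (rule sym)
  qed
  finally show ?thesis .
qed

lemma big_eig:
  fixes H :: "complex mat"
  assumes H: "H \<in> carrier_mat n n" and h: "herm n H"
    and psd: "\<And>w. w \<in> carrier_vec n \<Longrightarrow> Im (qf n H w) = 0 \<and> Re (qf n H w) \<ge> 0"
    and un: "nsq n u > 0" and c: "c > 0"
    and ray: "Re (qf n H u) \<ge> c * nsq n u"
  shows "\<exists>e. poly (char_poly H) e = 0 \<and> Re e \<ge> c"
proof (rule ccontr)
  assume "\<not> ?thesis"
  hence lt: "\<And>e. eigenvalue H e \<Longrightarrow> Re e < c" using eigenvalue_root_char_poly[OF H] by force
  have n: "n > 0" using un unfolding nsq_def by (cases n) auto
  define sr where "sr = spectral_radius H"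
  from spectral_radius_mem_max(1)[OF H n] obtain e0 where e0: "e0 \<in> spectrum H" and sre: "sr = cmod e0"
    unfolding sr_def by auto
  have ev0: "eigenvalue H e0" using e0 unfolding spectrum_def by auto
  from eigen_real[OF H psd ev0] have "Im e0 = 0" and re0: "Re e0 \<ge> 0" by auto
  hence "cmod e0 = Re e0" by (simp add: cmod_eq_Re)
  hence sr0: "sr \<ge> 0" and src: "sr < c" using lt[OF ev0] sre re0 by auto
  define r where "r = (sr + c) / 2"
  have r0: "r > 0" and srr: "sr < r" and rc: "r < c" using sr0 src c unfolding r_def by auto
  define B where "B = complex_of_real (1/r) \<cdot>\<^sub>m H"
  have B: "B \<in> carrier_mat n n" unfolding B_def using H by simp
  have evB: "cmod l < 1" if "eigenvalue B l" for l
  proof -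
    have "eigenvalue H (l / complex_of_real (1/r))"
      by (rule eigen_scale[OF H _ that[unfolded B_def]]) (use r0 in simp)
    hence "cmod (l / complex_of_real (1/r)) \<le> sr"
      unfolding sr_def by (intro spectral_radius_mem_max(2)[OF H n]) (auto simp: spectrum_def)
    hence "cmod l * r \<le> sr" using r0 by (simp add: norm_mult)
    hence "cmod l * r < 1 * r" using srr by simp
    thus ?thesis using r0 by (simp only: mult_less_cancel_right)
  qed
  have "spectral_radius B < 1"
  proof -
    from spectral_radius_mem_max(1)[OF B n] obtain l where "l \<in> spectrum B" "spectral_radius B = cmod l" by auto
    thus ?thesis using evB unfolding spectrum_def by auto
  qed
  from spectral_radius_jnf_norm_bound_less_1_upper_triangular[OF B this]
  obtain C where C: "\<And>k. norm_bound (B ^\<^sub>m k) C" by auto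
  have hB: "herm n B" unfolding herm_def
  proof (intro allI impI)
    fix i j assume ij: "i < n" "j < n"
    hence "H$$(i,j) = cnj (H$$(j,i))" using h unfolding herm_def by blast
    thus "B$$(i,j) = cnj (B$$(j,i))" using H ij unfolding B_def by simp
  qed
  have qB: "qf n B u = complex_of_real (1/r) * qf n H u"
    unfolding qf_def B_def using H by (simp add: sum_distrib_left mult_ac)
  define q where "q = c / r"
  have q1: "q > 1" unfolding q_def using rc r0 by simp
  have "Re (qf n B u) = Re (qf n H u) / r" unfolding qB by simp
  also have "\<dots> \<ge> (c * nsq n u) / r" using ray r0 by (simp add: divide_right_mono)
  finally have rayB: "Re (qf n B u) \<ge> q * nsq n u" unfolding q_def by simp
  define K where "K = C * (\<Sum>i<n. cmod (u$i))\<^sup>2"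
  have bnd: "q^(2^k) * nsq n u \<le> K" for k
  proof -
    have "q^(2^k) * nsq n u \<le> Re (qf n (B ^\<^sub>m (2^k)) u)"
      by (rule power_growth[OF B hB _ un rayB]) (use q1 in simp)
    also have "\<dots> \<le> cmod (qf n (B ^\<^sub>m (2^k)) u)" by (rule complex_Re_le_cmod)
    also have "\<dots> \<le> K" unfolding K_def by (rule qf_bound[OF _ C]) (use B in simp)
    finally show ?thesis .
  qed
  from real_arch_pow[OF q1, of "K / nsq n u"] obtain k where k: "K / nsq n u < q^k" by auto
  have "q^k \<le> q^(2^k)" by (rule power_increasing) (use q1 less_exp[of k] in auto)
  hence "K / nsq n u < q^(2^k)" using k by simp
  hence "K < q^(2^k) * nsq n u" using un by (simp add: divide_less_eq)
  with bnd[of k] show False by simp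
qed

lemma renyi_bound:
  fixes \<rho> :: "complex mat"
  assumes r: "\<rho> \<in> carrier_mat n n" and e: "poly (char_poly \<rho>) e = 0" and eL: "Re e \<ge> L"
    and L: "L > 0" and a: "\<alpha> > 1"
  shows "renyi_entropy \<alpha> \<rho> \<le> \<alpha> / (\<alpha> - 1) * ln (1 / L)"
proof -
  let ?p = "char_poly \<rho>"
  have p0: "?p \<noteq> 0" using degree_monic_char_poly[OF r] by auto
  have fin: "finite {z. poly ?p z = 0}" by (rule poly_roots_finite[OF p0])
  have ord: "order e ?p \<ge> 1" using order_root[of ?p e] e p0 by auto
  have "L powr \<alpha> \<le> (Re e) powr \<alpha>" by (rule powr_mono2) (use a L eL in auto)
  also have "\<dots> \<le> real (order e ?p) * (Re e) powr \<alpha>"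
    using ord by (simp add: mult_le_cancel_right1)
  also have "\<dots> \<le> trace_powr \<rho> \<alpha>" unfolding trace_powr_def
    by (rule member_le_sum) (use fin e in auto)
  finally have tr: "L powr \<alpha> \<le> trace_powr \<rho> \<alpha>" .
  have Lp: "L powr \<alpha> > 0" using L by simp
  have "\<alpha> * ln L \<le> ln (trace_powr \<rho> \<alpha>)"
    using ln_le_cancel_iff[of "L powr \<alpha>" "trace_powr \<rho> \<alpha>"] tr Lp L by simp
  hence "- ln (trace_powr \<rho> \<alpha>) / (\<alpha> - 1) \<le> - (\<alpha> * ln L) / (\<alpha> - 1)"
    using a by (simp add: divide_right_mono)
  moreover have "renyi_entropy \<alpha> \<rho> = - ln (trace_powr \<rho> \<alpha>) / (\<alpha> - 1)"
    unfolding renyi_entropy_def using a by (simp add: field_simps)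
  moreover have "\<alpha> / (\<alpha> - 1) * ln (1 / L) = - (\<alpha> * ln L) / (\<alpha> - 1)"
    using L by (simp add: ln_div)
  ultimately show ?thesis by simp
qed

lemma sum_split_nm: "(\<Sum>k<n*m. f k) = (\<Sum>i<n. \<Sum>j<(m::nat). f (i*m+j))"
proof -
  have "(\<Sum>k\<in>{i*m..<i*m+m}. f k) = (\<Sum>j<m. f (i*m+j))" for i
  proof -
    have "(\<Sum>k\<in>{0+i*m..<m+i*m}. f k) = (\<Sum>j\<in>{0..<m}. f (j + i*m))" by (rule sum.shift_bounds_nat_ivl)
    thus ?thesis by (simp add: atLeast0LessThan add.commute)
  qed
  thus ?thesis using sum.nat_group[of f m n] by simp
qed

lemma idx_lt: assumes "i < n" "j < (m::nat)" shows "i*m+j < n*m"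
proof -
  have "i*m+j < Suc i * m" using assms by simp
  also have "\<dots> \<le> n*m" using assms by (intro mult_le_mono1) simp
  finally show ?thesis .
qed

lemma idx_div: "j < (m::nat) \<Longrightarrow> (i*m+j) div m = i" by simp
lemma idx_mod: "j < (m::nat) \<Longrightarrow> (i*m+j) mod m = j" by simp

lemma ptrace_entry:
  assumes "dim_vec \<psi> = n*m" "i < n" "i' < n"
  shows "ptrace_B n m (ketbra \<psi>) $$ (i,i') = (\<Sum>j<m. \<psi>$(i*m+j) * cnj (\<psi>$(i'*m+j)))"
  using assms idx_lt[of i n _ m] idx_lt[of i' n _ m]
  by (auto simp: ptrace_B_def ketbra_def intro!: sum.cong)

lemma ptrace_qf:
  assumes d: "dim_vec \<psi> = n*m"
  shows "qf n (ptrace_B n m (ketbra \<psi>)) w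
       = complex_of_real (\<Sum>j<m. (cmod (\<Sum>i<n. cnj (w$i) * \<psi>$(i*m+j)))\<^sup>2)"
proof -
  have "qf n (ptrace_B n m (ketbra \<psi>)) w
      = (\<Sum>i<n. \<Sum>i'<n. \<Sum>j<m. cnj (w$i) * \<psi>$(i*m+j) * (cnj (\<psi>$(i'*m+j)) * w$i'))"
    unfolding qf_def by (auto simp: ptrace_entry[OF d] sum_distrib_left sum_distrib_right mult_ac intro!: sum.cong)
  also have "\<dots> = (\<Sum>i<n. \<Sum>j<m. \<Sum>i'<n. cnj (w$i) * \<psi>$(i*m+j) * (cnj (\<psi>$(i'*m+j)) * w$i'))"
    by (rule sum.cong, simp, rule sum.swap)
  also have "\<dots> = (\<Sum>j<m. \<Sum>i<n. \<Sum>i'<n. cnj (w$i) * \<psi>$(i*m+j) * (cnj (\<psi>$(i'*m+j)) * w$i'))"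
    by (rule sum.swap)
  also have "\<dots> = (\<Sum>j<m. (\<Sum>i<n. cnj (w$i) * \<psi>$(i*m+j)) * (\<Sum>i'<n. cnj (\<psi>$(i'*m+j)) * w$i'))"
    by (simp only: Groups_Big.sum_product)
  also have "\<dots> = (\<Sum>j<m. (\<Sum>i<n. cnj (w$i) * \<psi>$(i*m+j)) * cnj (\<Sum>i<n. cnj (w$i) * \<psi>$(i*m+j)))"
    by (simp add: mult.commute)
  also have "\<dots> = complex_of_real (\<Sum>j<m. (cmod (\<Sum>i<n. cnj (w$i) * \<psi>$(i*m+j)))\<^sup>2)"
    unfolding of_real_sum by (rule sum.cong, simp, simp only: complex_norm_square)
  finally show ?thesis .
qed

lemma ptrace_herm: assumes d: "dim_vec \<psi> = n*m"
  shows "herm n (ptrace_B n m (ketbra \<psi>))"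
  unfolding herm_def by (auto simp: ptrace_entry[OF d] mult.commute)

lemma cmod_add_sq: "(cmod (p + q))\<^sup>2 = (cmod p)\<^sup>2 + (cmod q)\<^sup>2 + 2 * Re (cnj p * q)"
  unfolding cmod_power2 by (simp add: power2_eq_square algebra_simps)

lemma braket_self: "braket v v = complex_of_real (\<Sum>i<dim_vec v. (cmod (v$i))\<^sup>2)"
  unfolding braket_def of_real_sum by (rule sum.cong, simp, simp only: complex_norm_square mult.commute)

lemma braket_self_one: "braket v v = 1 \<Longrightarrow> (\<Sum>i<dim_vec v. (cmod (v$i))\<^sup>2) = 1"
  using braket_self[of v] by (metis of_real_eq_1_iff)

theorem mainTheorem1:
  fixes dA dB :: nat and a0 b0 \<phi> :: "complex vec" and \<epsilon> :: real
  assumes a0_dim: "dim_vec a0 = dA" and b0_dim: "dim_vec b0 = dB"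
    and \<phi>_dim: "dim_vec \<phi> = dA * dB"
    and a0_unit: "braket a0 a0 = 1" and b0_unit: "braket b0 b0 = 1"
    and \<phi>_unit: "braket \<phi> \<phi> = 1"
    and \<epsilon>_pos: "0 < \<epsilon>" and \<epsilon>_lt1: "\<epsilon> < 1"
  shows "let zero = tensor_vec a0 b0;
             x = contract_B dA b0 \<phi>;
             y = \<phi> - tensor_vec x b0;
             N = 1 + \<epsilon>\<^sup>2 + 2 * \<epsilon> * Re (braket zero \<phi>);
             \<psi> = complex_of_real (1 / sqrt N) \<cdot>\<^sub>v (zero + complex_of_real \<epsilon> \<cdot>\<^sub>v \<phi>);
             \<rho>A = ptrace_B dA dB (ketbra \<psi>);
             \<mu> = \<epsilon>\<^sup>2 * Re (braket y y) / N
         in \<mu> \<le> \<epsilon>\<^sup>2 \<and>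
            (\<forall>\<alpha>::real. \<alpha> > 1 \<longrightarrow>
               renyi_entropy \<alpha> \<rho>A \<le> \<alpha> / (\<alpha> - 1) * ln (1 / (1 - \<mu>)) \<and>
               \<alpha> / (\<alpha> - 1) * ln (1 / (1 - \<mu>)) \<le> \<alpha> / (\<alpha> - 1) * ln (1 / (1 - \<epsilon>\<^sup>2)))"
proof -
  define zero where "zero = tensor_vec a0 b0"
  define x where "x = contract_B dA b0 \<phi>"
  define y where "y = \<phi> - tensor_vec x b0"
  define N where "N = 1 + \<epsilon>\<^sup>2 + 2 * \<epsilon> * Re (braket zero \<phi>)"
  define \<psi> where "\<psi> = complex_of_real (1 / sqrt N) \<cdot>\<^sub>v (zero + complex_of_real \<epsilon> \<cdot>\<^sub>v \<phi>)"
  define \<rho>A where "\<rho>A = ptrace_B dA dB (ketbra \<psi>)"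
  define \<mu> where "\<mu> = \<epsilon>\<^sup>2 * Re (braket y y) / N"
  define c where "c = complex_of_real (1 / sqrt N)"
  let ?a = "\<lambda>i. a0 $ i" and ?b = "\<lambda>j. b0 $ j" and ?f = "\<lambda>i j. \<phi> $ (i*dB+j)"
  have dx: "dim_vec x = dA" unfolding x_def contract_B_def by simp
  have dz: "dim_vec zero = dA * dB" unfolding zero_def tensor_vec_def using a0_dim b0_dim by simp
  have dy: "dim_vec y = dA * dB" unfolding y_def tensor_vec_def using dx b0_dim by simp
  have dpsi: "dim_vec \<psi> = dA * dB" unfolding \<psi>_def using \<phi>_dim by simp
  have zI: "zero $ (i*dB+j) = a0$i * b0$j" if "i < dA" "j < dB" for i j
    using that idx_lt[OF that] a0_dim b0_dim unfolding zero_def tensor_vec_def by simp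
  have xI: "x $ i = (\<Sum>j<dB. cnj (b0$j) * \<phi>$(i*dB+j))" if "i < dA" for i
    using that b0_dim unfolding x_def contract_B_def by simp
  have yI: "y $ (i*dB+j) = \<phi>$(i*dB+j) - x$i * b0$j" if "i < dA" "j < dB" for i j
    using that idx_lt[OF that] dx b0_dim unfolding y_def tensor_vec_def by simp
  have psiI: "\<psi> $ (i*dB+j) = c * (a0$i * b0$j + complex_of_real \<epsilon> * \<phi>$(i*dB+j))" if "i < dA" "j < dB" for i j
    using that idx_lt[OF that] zI[OF that] dz \<phi>_dim unfolding \<psi>_def c_def by simp
  have Bn: "(\<Sum>j<dB. (cmod (b0$j))\<^sup>2) = 1" using braket_self_one[OF b0_unit] b0_dim by simp
  have An: "(\<Sum>i<dA. (cmod (a0$i))\<^sup>2) = 1" using braket_self_one[OF a0_unit] a0_dim by simp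
  have Fn: "(\<Sum>i<dA. \<Sum>j<dB. (cmod (\<phi>$(i*dB+j)))\<^sup>2) = 1"
    using braket_self_one[OF \<phi>_unit] \<phi>_dim sum_split_nm[of "\<lambda>k. (cmod (\<phi>$k))\<^sup>2" dA dB] by simp
  define S where "S = (\<Sum>i<dA. (cmod (x$i))\<^sup>2)"
  define T where "T = (\<Sum>i<dA. \<Sum>j<dB. (cmod (y$(i*dB+j)))\<^sup>2)"
  define R where "R = Re (\<Sum>i<dA. cnj (a0$i) * x$i)"
  have bzp: "braket zero \<phi> = (\<Sum>i<dA. cnj (a0$i) * x$i)"
  proof -
    have "braket zero \<phi> = (\<Sum>i<dA. \<Sum>j<dB. cnj (zero $ (i*dB+j)) * \<phi>$(i*dB+j))"
      unfolding braket_def \<phi>_dim by (rule sum_split_nm)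
    also have "\<dots> = (\<Sum>i<dA. cnj (a0$i) * (\<Sum>j<dB. cnj (b0$j) * \<phi>$(i*dB+j)))"
      by (auto simp: zI sum_distrib_left mult_ac intro!: sum.cong)
    also have "\<dots> = (\<Sum>i<dA. cnj (a0$i) * x$i)" by (auto simp: xI intro!: sum.cong)
    finally show ?thesis .
  qed
  have byy: "Re (braket y y) = T"
    unfolding braket_self T_def dy using sum_split_nm[of "\<lambda>k. (cmod (y$k))\<^sup>2" dA dB] by simp
  have orth: "(\<Sum>j<dB. cnj (b0$j) * y$(i*dB+j)) = 0" if i: "i < dA" for i
  proof -
    have "(\<Sum>j<dB. cnj (b0$j) * y$(i*dB+j)) = (\<Sum>j<dB. cnj (b0$j) * \<phi>$(i*dB+j) - x$i * (cnj (b0$j) * b0$j))"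
    proof (rule sum.cong[OF refl])
      fix j assume "j \<in> {..<dB}"
      hence "y$(i*dB+j) = \<phi>$(i*dB+j) - x$i * b0$j" using yI[OF i] by simp
      thus "cnj (b0$j) * y$(i*dB+j) = cnj (b0$j) * \<phi>$(i*dB+j) - x$i * (cnj (b0$j) * b0$j)"
        by (simp only: right_diff_distrib mult_ac)
    qed
    also have "\<dots> = (\<Sum>j<dB. cnj (b0$j) * \<phi>$(i*dB+j)) - x$i * (\<Sum>j<dB. cnj (b0$j) * b0$j)"
      by (simp only: sum_subtractf sum_distrib_left)
    also have "(\<Sum>j<dB. cnj (b0$j) * b0$j) = 1" using b0_unit b0_dim unfolding braket_def by simp
    finally show ?thesis using xI[OF i] by simp
  qed
  have ST: "S + T = 1"
  proof -
    have row: "(\<Sum>j<dB. (cmod (\<phi>$(i*dB+j)))\<^sup>2) = (cmod (x$i))\<^sup>2 + (\<Sum>j<dB. (cmod (y$(i*dB+j)))\<^sup>2)"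
      if i: "i < dA" for i
    proof -
      have "(\<Sum>j<dB. (cmod (\<phi>$(i*dB+j)))\<^sup>2)
          = (\<Sum>j<dB. (cmod (x$i * b0$j))\<^sup>2 + (cmod (y$(i*dB+j)))\<^sup>2 + 2 * Re (cnj (x$i * b0$j) * y$(i*dB+j)))"
      proof (rule sum.cong[OF refl])
        fix j assume "j \<in> {..<dB}"
        hence "\<phi>$(i*dB+j) = x$i * b0$j + y$(i*dB+j)" using yI[OF i] by simp
        thus "(cmod (\<phi>$(i*dB+j)))\<^sup>2 = (cmod (x$i * b0$j))\<^sup>2 + (cmod (y$(i*dB+j)))\<^sup>2 + 2 * Re (cnj (x$i * b0$j) * y$(i*dB+j))"
          by (simp only: cmod_add_sq)
      qed
      also have "\<dots> = (cmod (x$i))\<^sup>2 * (\<Sum>j<dB. (cmod (b0$j))\<^sup>2) + (\<Sum>j<dB. (cmod (y$(i*dB+j)))\<^sup>2)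
                     + 2 * Re (cnj (x$i) * (\<Sum>j<dB. cnj (b0$j) * y$(i*dB+j)))"
        by (simp add: sum.distrib sum_distrib_left norm_mult power_mult_distrib Re_sum mult_ac)
      also have "\<dots> = (cmod (x$i))\<^sup>2 + (\<Sum>j<dB. (cmod (y$(i*dB+j)))\<^sup>2)"
        using orth[OF i] Bn by simp
      finally show ?thesis .
    qed
    have "1 = (\<Sum>i<dA. (cmod (x$i))\<^sup>2 + (\<Sum>j<dB. (cmod (y$(i*dB+j)))\<^sup>2))"
      using Fn row by simp
    thus ?thesis unfolding S_def T_def by (simp add: sum.distrib)
  qed
  define u where "u = vec dA (\<lambda>i. a0$i + complex_of_real \<epsilon> * x$i)"
  have uc: "u \<in> carrier_vec dA" unfolding u_def by simp
  define V where "V = nsq dA u"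
  have UV: "V = 1 + \<epsilon>\<^sup>2 * S + 2 * \<epsilon> * R"
  proof -
    have "V = (\<Sum>i<dA. (cmod (a0$i))\<^sup>2 + \<epsilon>\<^sup>2 * (cmod (x$i))\<^sup>2 + 2 * \<epsilon> * Re (cnj (a0$i) * x$i))"
      unfolding V_def nsq_def u_def
      by (rule sum.cong[OF refl]) (simp add: cmod_add_sq norm_mult power_mult_distrib algebra_simps)
    also have "\<dots> = (\<Sum>i<dA. (cmod (a0$i))\<^sup>2) + \<epsilon>\<^sup>2 * (\<Sum>i<dA. (cmod (x$i))\<^sup>2) + 2 * \<epsilon> * (\<Sum>i<dA. Re (cnj (a0$i) * x$i))"
      by (simp only: sum.distrib sum_distrib_left)
    also have "(\<Sum>i<dA. Re (cnj (a0$i) * x$i)) = R" unfolding R_def by (simp only: Re_sum)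
    finally show ?thesis unfolding S_def using An by simp
  qed
  have RS: "R\<^sup>2 \<le> S"
  proof -
    have "R\<^sup>2 \<le> (cmod (\<Sum>i<dA. cnj (a0$i) * x$i))\<^sup>2" unfolding R_def
      by (metis abs_Re_le_cmod power2_abs power_mono abs_ge_zero)
    also have "\<dots> \<le> (\<Sum>i<dA. (cmod (a0$i))\<^sup>2) * (\<Sum>i<dA. (cmod (x$i))\<^sup>2)" by (rule cs_complex)
    finally show ?thesis using An unfolding S_def by simp
  qed
  have NR: "N = 1 + \<epsilon>\<^sup>2 + 2 * \<epsilon> * R" unfolding N_def bzp R_def ..
  have T0: "T \<ge> 0" unfolding T_def by (intro sum_nonneg) auto
  have S0: "S \<ge> 0" unfolding S_def by (intro sum_nonneg) auto
  have Rge: "R \<ge> -1"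
  proof (rule ccontr)
    assume "\<not> R \<ge> -1" hence "R\<^sup>2 > 1" by (smt (verit) one_less_power pos2 power2_minus)
    with RS ST T0 show False by linarith
  qed
  have Npos: "N > 0"
  proof -
    have "2 * \<epsilon> * R \<ge> 2 * \<epsilon> * (-1)" using Rge \<epsilon>_pos by (intro mult_left_mono) auto
    hence "N \<ge> (1 - \<epsilon>)\<^sup>2" unfolding NR by (simp add: power2_eq_square algebra_simps)
    moreover have "(1 - \<epsilon>)\<^sup>2 > 0" using \<epsilon>_lt1 by simp
    ultimately show ?thesis by linarith
  qed
  have TN: "T \<le> N"
  proof -
    have "N - T = \<epsilon>\<^sup>2 + 2 * \<epsilon> * R + S" using NR ST by simp
    also have "\<dots> \<ge> (\<epsilon> + R)\<^sup>2" using RS by (simp add: power2_eq_square algebra_simps)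
    finally show ?thesis by (smt (verit) zero_le_power2)
  qed
  have S1: "S = 1 - T" using ST by simp
  have VN: "V = N - \<epsilon>\<^sup>2 * T" unfolding UV NR S1 by (simp add: algebra_simps)
  have Vpos: "V > 0"
  proof -
    have "\<epsilon>\<^sup>2 * T \<le> \<epsilon>\<^sup>2 * N" using TN by (simp add: mult_left_mono)
    moreover have "\<epsilon>\<^sup>2 < 1" using \<epsilon>_pos \<epsilon>_lt1 by (simp add: power_less_one_iff)
    hence "\<epsilon>\<^sup>2 * N < N" using Npos by simp
    ultimately show ?thesis using VN by linarith
  qed
  have mu: "\<mu> = \<epsilon>\<^sup>2 * T / N" unfolding \<mu>_def byy ..
  have mu_le: "\<mu> \<le> \<epsilon>\<^sup>2"
  proof -
    have "T / N \<le> 1" using TN Npos by simp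
    hence "\<epsilon>\<^sup>2 * (T / N) \<le> \<epsilon>\<^sup>2 * 1" by (intro mult_left_mono) auto
    thus ?thesis unfolding mu by simp
  qed
  have one_mu: "1 - \<mu> = V / N" unfolding mu VN using Npos by (simp add: field_simps)
  have rc: "\<rho>A \<in> carrier_mat dA dA" unfolding \<rho>A_def ptrace_B_def by simp
  have rh: "herm dA \<rho>A" unfolding \<rho>A_def by (rule ptrace_herm[OF dpsi])
  have rpsd: "Im (qf dA \<rho>A w) = 0 \<and> Re (qf dA \<rho>A w) \<ge> 0" for w
    unfolding \<rho>A_def ptrace_qf[OF dpsi] by (simp add: sum_nonneg)
  have ray: "Re (qf dA \<rho>A u) \<ge> (V / N) * nsq dA u"
  proof -
    define Z where "Z = (\<lambda>j. \<Sum>i<dA. cnj (u$i) * \<psi>$(i*dB+j))"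
    have q: "Re (qf dA \<rho>A u) = (\<Sum>j<dB. (cmod (Z j))\<^sup>2)"
      unfolding \<rho>A_def ptrace_qf[OF dpsi] Z_def by simp
    have inner: "(\<Sum>j<dB. cnj (b0$j) * \<psi>$(i*dB+j)) = c * u$i" if i: "i < dA" for i
    proof -
      have "(\<Sum>j<dB. cnj (b0$j) * \<psi>$(i*dB+j))
          = (\<Sum>j<dB. c * (a0$i * (cnj (b0$j) * b0$j)) + c * (complex_of_real \<epsilon> * (cnj (b0$j) * \<phi>$(i*dB+j))))"
      proof (rule sum.cong[OF refl])
        fix j assume "j \<in> {..<dB}"
        hence "\<psi>$(i*dB+j) = c * (a0$i * b0$j + complex_of_real \<epsilon> * \<phi>$(i*dB+j))" using psiI[OF i] by simp
        thus "cnj (b0$j) * \<psi>$(i*dB+j) = c * (a0$i * (cnj (b0$j) * b0$j)) + c * (complex_of_real \<epsilon> * (cnj (b0$j) * \<phi>$(i*dB+j)))"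
          by (simp only: distrib_left mult_ac)
      qed
      also have "\<dots> = c * (a0$i * (\<Sum>j<dB. cnj (b0$j) * b0$j) + complex_of_real \<epsilon> * (\<Sum>j<dB. cnj (b0$j) * \<phi>$(i*dB+j)))"
        by (simp only: sum.distrib sum_distrib_left distrib_left)
      also have "(\<Sum>j<dB. cnj (b0$j) * b0$j) = 1" using b0_unit b0_dim unfolding braket_def by simp
      finally show ?thesis using xI[OF i] i unfolding u_def by simp
    qed
    have "(\<Sum>j<dB. cnj (b0$j) * Z j) = (\<Sum>i<dA. cnj (u$i) * (\<Sum>j<dB. cnj (b0$j) * \<psi>$(i*dB+j)))"
      unfolding Z_def by (simp add: sum_distrib_left mult_ac sum.swap[of _ "{..<dB}"])
    also have "\<dots> = c * (\<Sum>i<dA. cnj (u$i) * u$i)" by (simp add: inner sum_distrib_left mult_ac)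
    also have "(\<Sum>i<dA. cnj (u$i) * u$i) = complex_of_real V"
      unfolding V_def nsq_def of_real_sum by (rule sum.cong, simp, simp only: complex_norm_square mult.commute)
    finally have bz: "(\<Sum>j<dB. cnj (b0$j) * Z j) = c * complex_of_real V" .
    have "(cmod (c * complex_of_real V))\<^sup>2 \<le> (\<Sum>j<dB. (cmod (b0$j))\<^sup>2) * (\<Sum>j<dB. (cmod (Z j))\<^sup>2)"
      unfolding bz[symmetric] by (rule cs_complex)
    hence "(cmod (c * complex_of_real V))\<^sup>2 \<le> Re (qf dA \<rho>A u)" using Bn q by simp
    moreover have "(cmod (c * complex_of_real V))\<^sup>2 = (V / N) * V"
    proof -
      have "c * complex_of_real V = complex_of_real (V / sqrt N)" unfolding c_def by simp
      hence "(cmod (c * complex_of_real V))\<^sup>2 = (V / sqrt N)\<^sup>2" using Vpos Npos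
        by (simp only: norm_of_real) simp
      also have "\<dots> = V\<^sup>2 / N" using Npos by (simp add: power_divide)
      finally show ?thesis by (simp add: power2_eq_square)
    qed
    ultimately show ?thesis unfolding V_def by simp
  qed
  have VNpos: "V / N > 0" using Vpos Npos by simp
  from big_eig[OF rc rh rpsd _ VNpos ray] Vpos obtain e where
    e: "poly (char_poly \<rho>A) e = 0" and eV: "Re e \<ge> V / N" unfolding V_def by auto
  have main: "\<mu> \<le> \<epsilon>\<^sup>2 \<and>
            (\<forall>\<alpha>::real. \<alpha> > 1 \<longrightarrow>
               renyi_entropy \<alpha> \<rho>A \<le> \<alpha> / (\<alpha> - 1) * ln (1 / (1 - \<mu>)) \<and>
               \<alpha> / (\<alpha> - 1) * ln (1 / (1 - \<mu>)) \<le> \<alpha> / (\<alpha> - 1) * ln (1 / (1 - \<epsilon>\<^sup>2)))"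
  proof (intro conjI allI impI mu_le)
    fix \<alpha> :: real assume a: "\<alpha> > 1"
    show "renyi_entropy \<alpha> \<rho>A \<le> \<alpha> / (\<alpha> - 1) * ln (1 / (1 - \<mu>))"
      by (rule renyi_bound[OF rc e _ _ a]) (use eV one_mu VNpos in auto)
    have e1: "1 - \<epsilon>\<^sup>2 > 0" using \<epsilon>_pos \<epsilon>_lt1 by (simp add: power_less_one_iff)
    have "ln (1 / (1 - \<mu>)) \<le> ln (1 / (1 - \<epsilon>\<^sup>2))"
      using mu_le e1 by (simp add: ln_div)
    moreover have "\<alpha> / (\<alpha> - 1) \<ge> 0" using a by simp
    ultimately show "\<alpha> / (\<alpha> - 1) * ln (1 / (1 - \<mu>)) \<le> \<alpha> / (\<alpha> - 1) * ln (1 / (1 - \<epsilon>\<^sup>2))"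
      by (rule mult_left_mono)
  qed
  show ?thesis using main
    unfolding Let_def zero_def x_def y_def N_def \<psi>_def \<rho>A_def \<mu>_def .
qed

end
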